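(* Let $n\ge2$ and consider the system \[\dot y=z^2(n+1-y)-ny,\qquad \dot z=\tfrac{n+1}{n}z(n-1+y)-(n+z^2)z.\] Let $D=\{(y,z)\in\mathbb R^2_{>0}:\tfrac{z^2(n+1)}{z^2+n}\le y<1\}$. Then $(0,0)$ is a global attractor of this system on $D$: for every initial condition $(y_0,z_0)\in D$ the solution exists for all $t\ge0$ and $(y(t),z(t))\to(0,0)$ as $t\to\infty$. *)

theory Defs
  imports "HOL-Analysis.Analysis"
begin

definition fy :: "real \<Rightarrow> real \<Rightarrow> real \<Rightarrow> real" where
  "fy n y z = z^2 * (n + 1 - y) - n * y"

definition fz :: "real \<Rightarrow> real \<Rightarrow> real \<Rightarrow> real" where
  "fz n y z = (n + 1) / n * z * (n - 1 + y) - (n + z^2) * z"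

definition regionD :: "real \<Rightarrow> (real \<times> real) set" where
  "regionD n = {(y, z). y > 0 \<and> z > 0 \<and> z^2 * (n + 1) / (z^2 + n) \<le> y \<and> y < 1}"

definition global_solution ::
  "real \<Rightarrow> real \<Rightarrow> real \<Rightarrow> (real \<Rightarrow> real) \<Rightarrow> (real \<Rightarrow> real) \<Rightarrow> bool" where
  "global_solution n y0 z0 y z \<longleftrightarrow>
     y 0 = y0 \<and> z 0 = z0 \<and>
     (\<forall>t\<ge>0. (y has_real_derivative fy n (y t) (z t)) (at t within {0..}) \<and>
             (z has_real_derivative fz n (y t) (z t)) (at t within {0..}))"

end

theory Submission
  imports Defs
begin

definition psi :: "real \<Rightarrow> real \<Rightarrow> real \<Rightarrow> real" where
  "psi n y z = n * y - z^2 * (n + 1 - y)"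

lemma fy_psi: "fy n y z = - psi n y z"
  unfolding fy_def psi_def by (simp add: algebra_simps)

lemma fz_alt: "n \<noteq> 0 \<Longrightarrow> fz n y z = z * (((n+1)*y - 1)/n - z^2)"
  unfolding fz_def by (simp add: field_simps power2_eq_square)

lemma within_to_at:
  fixes f :: "real \<Rightarrow> real"
  assumes "(f has_real_derivative D) (at t within {0..})" "t > 0"
  shows "(f has_real_derivative D) (at t)"
proof -
  have "at t within {0..} = at t"
    by (rule at_within_open_subset[where S="{0<..}"]) (use assms in auto)
  with assms show ?thesis by simp
qed

lemma indef_int_deriv:
  fixes g :: "real \<Rightarrow> 'a::banach"
  assumes "continuous_on {0..} g" "t \<ge> 0"
  shows "((\<lambda>u. integral {0..u} g) has_vector_derivative g t) (at t within {0..})"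
proof -
  have "((\<lambda>u. integral {0..u} g) has_vector_derivative g t) (at t within {0..t+1})"
    by (rule integral_has_vector_derivative) (use assms in \<open>auto intro: continuous_on_subset\<close>)
  moreover have "at t within {0..t+1} = at t within {0..}"
    by (rule at_within_nhd[where S="{..<t+1}"]) auto
  ultimately show ?thesis by simp
qed

lemma int_deriv_open:
  fixes g :: "real \<Rightarrow> real"
  assumes "continuous_on {0..T} g" "0 < t" "t < T"
  shows "((\<lambda>u. integral {0..u} g) has_real_derivative g t) (at t)"
proof -
  have "((\<lambda>u. integral {0..u} g) has_real_derivative g t) (at t within {0..T})"
    by (rule integral_has_real_derivative) (use assms in auto)
  moreover have "at t within {0..T} = at t" using assms by (simp add: at_within_Icc_at)
  ultimately show ?thesis by simp
qed

lemma int_cont: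
  fixes g :: "real \<Rightarrow> real"
  assumes "continuous_on {0..T} g"
  shows "continuous_on {0..T} (\<lambda>u. integral {0..u} g)"
proof -
  have "\<And>t. t \<in> {0..T} \<Longrightarrow> continuous (at t within {0..T}) (\<lambda>u. integral {0..u} g)"
    by (rule DERIV_continuous, rule integral_has_real_derivative) (use assms in auto)
  then show ?thesis by (simp add: continuous_on_eq_continuous_within)
qed

lemma alg_aux:
  fixes E P c r n s :: real assumes "n > 0" "s > 0"
    and "E * (n * s) + (n * s * s + c) * P = r * n"
  shows "E + (s + c / (n * s)) * P = r / s"
proof -
  have q: "n * s > 0" using assms by simp
  have "E + (s + c / (n * s)) * P = (E * (n * s) + (n * s * s + c) * P) / (n * s)"
    using assms(1,2) by (simp add: field_simps)
  also have "\<dots> = r / s" using assms(1,2) by (simp add: assms(3))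
  finally show ?thesis .
qed

lemma alg_id:
  fixes n Y Z :: real assumes n: "n > 0"
  shows "n * fy n Y Z - 2 * Z * fz n Y Z * (n + 1 - Y) + Z^2 * fy n Y Z
     + (n + Z^2 + 2 * Z^2 * (n+1-Y) * (n+1) / (n * (n + Z^2))) * psi n Y Z
     = 2 * Z^2 * (n+1-Y) * (Z^2 - 1)^2 / (n + Z^2)"
proof -
  have p: "n + Z^2 > 0" using n by (simp add: add_pos_nonneg)
  have e: "fz n Y Z = Z * ((n+1)*(n-1+Y) - n*(n+Z^2)) / n" using n unfolding fz_def by (simp add: field_simps)
  have "(n * fy n Y Z - 2 * Z * fz n Y Z * (n + 1 - Y) + Z^2 * fy n Y Z) * (n * (n + Z^2))
     + (n*(n + Z^2)*(n+Z^2) + 2 * Z^2 * (n+1-Y) * (n+1)) * psi n Y Z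
     = 2 * Z^2 * (n+1-Y) * (Z^2 - 1)^2 * n"
    unfolding e fy_def psi_def using n by (simp add: field_simps) algebra
  then show ?thesis by (rule alg_aux[OF n p])
qed

lemma inv_core:
  fixes n y0 z0 T :: real and y z :: "real \<Rightarrow> real"
  assumes n: "n > 0"
    and D: "y0 > 0" "z0 > 0" "z0^2 * (n + 1) / (z0^2 + n) \<le> y0" "y0 < 1"
    and init: "y 0 = y0" "z 0 = z0" and T: "T \<ge> 0"
    and cy: "continuous_on {0..T} y" and cz: "continuous_on {0..T} z"
    and dy: "\<And>t. 0 < t \<Longrightarrow> t < T \<Longrightarrow> (y has_real_derivative fy n (y t) (z t)) (at t)"
    and dz: "\<And>t. 0 < t \<Longrightarrow> t < T \<Longrightarrow> (z has_real_derivative fz n (y t) (z t)) (at t)"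
    and yb: "\<And>t. 0 < t \<Longrightarrow> t < T \<Longrightarrow> y t \<le> n + 1"
    and t: "0 \<le> t" "t \<le> T"
  shows "z t > 0 \<and> psi n (y t) (z t) \<ge> 0 \<and> y t \<le> y0 \<and> 0 < y t \<and> y t < 1 \<and> z t < 1"
proof -
  define h where "h s = ((n+1) * y s - 1)/n - (z s)^2" for s
  have ch: "continuous_on {0..T} h" unfolding h_def
    by (intro continuous_intros cy cz) (use n in auto)
  define H where "H s = integral {0..s} h" for s
  have cH: "continuous_on {0..T} H" unfolding H_def by (rule int_cont[OF ch])
  have dH: "(H has_real_derivative h s) (at s)" if "0 < s" "s < T" for s
    unfolding H_def by (rule int_deriv_open[OF ch that])
  define w where "w s = z s * exp (- H s)" for s
  have "w 0 \<le> w t"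
  proof (rule DERIV_nonneg_imp_increasing_open[OF t(1)])
    fix s assume s: "0 < s" "s < t"
    have "(w has_real_derivative (fz n (y s) (z s) * exp (- H s) + z s * (exp (- H s) * (- h s)))) (at s)"
      unfolding w_def using s t
      by (auto intro!: derivative_eq_intros dz dH)
    moreover have "fz n (y s) (z s) * exp (- H s) + z s * (exp (- H s) * (- h s)) = 0"
      using n by (simp add: fz_alt h_def algebra_simps)
    ultimately show "\<exists>d. (w has_real_derivative d) (at s) \<and> 0 \<le> d" by auto
  next
    show "continuous_on {0..t} w" unfolding w_def
      by (intro continuous_intros continuous_on_subset[OF cz] continuous_on_subset[OF cH]) (use t in auto)
  qed
  moreover have "w 0 = z0" unfolding w_def H_def using init by simp
  ultimately have "z t * exp (- H t) \<ge> z0" unfolding w_def by simp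
  hence zpos: "z t > 0" using D(2) by (smt (verit, ccfv_SIG) exp_gt_zero mult_nonpos_nonneg)
  define a where "a s = n + (z s)^2 + 2 * (z s)^2 * (n+1-y s) * (n+1) / (n * (n + (z s)^2))" for s
  define b where "b s = 2 * (z s)^2 * (n+1-y s) * ((z s)^2 - 1)^2 / (n + (z s)^2)" for s
  have nz: "n + (z s)^2 \<noteq> 0" for s using n by (smt (verit) zero_le_power2)
  have ca: "continuous_on {0..T} a" unfolding a_def
    by (intro continuous_intros cy cz) (use n nz in auto)
  define A where "A s = integral {0..s} a" for s
  have cA: "continuous_on {0..T} A" unfolding A_def by (rule int_cont[OF ca])
  have dA: "(A has_real_derivative a s) (at s)" if "0 < s" "s < T" for s
    unfolding A_def by (rule int_deriv_open[OF ca that])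
  define X where "X s = n * fy n (y s) (z s) - 2 * z s * fz n (y s) (z s) * (n + 1 - y s) + (z s)^2 * fy n (y s) (z s)" for s
  define p where "p s = psi n (y s) (z s)" for s
  have dpsi: "(p has_real_derivative X s) (at s)"
    if "0 < s" "s < T" for s
    unfolding p_def psi_def X_def using that
    by (auto intro!: derivative_eq_intros dy dz simp: algebra_simps)
  have cpsi: "continuous_on {0..T} p" unfolding p_def psi_def
    by (intro continuous_intros cy cz)
  have psipos: "psi n (y s) (z s) \<ge> 0" if s: "0 \<le> s" "s \<le> T" for s
  proof -
    define v where "v s = p s * exp (A s)" for s
    have "v 0 \<le> v s"
    proof (rule DERIV_nonneg_imp_increasing_open[OF s(1)])
      fix r assume r: "0 < r" "r < s"
      have "(v has_real_derivative (X r * exp (A r) + p r * (exp (A r) * a r))) (at r)"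
        unfolding v_def using r s
        by (auto intro!: derivative_eq_intros dpsi dA)
      moreover have "X r * exp (A r) + p r * (exp (A r) * a r) = b r * exp (A r)"
      proof -
        have key: "X r + a r * p r = b r"
          using alg_id[OF n, of "y r" "z r"] unfolding a_def b_def X_def p_def by simp
        have "X r * exp (A r) + p r * (exp (A r) * a r) = (X r + a r * p r) * exp (A r)"
          by (simp add: algebra_simps)
        then show ?thesis using key by simp
      qed
      moreover have "b r \<ge> 0" unfolding b_def using yb[of r] r s n
        by (intro divide_nonneg_pos mult_nonneg_nonneg) (auto simp: add_pos_nonneg)
      ultimately show "\<exists>d. (v has_real_derivative d) (at r) \<and> 0 \<le> d" by auto
    next
      show "continuous_on {0..s} v" unfolding v_def
        by (intro continuous_intros continuous_on_subset[OF cpsi] continuous_on_subset[OF cA]) (use s in auto)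
    qed
    moreover have "v 0 \<ge> 0"
    proof -
      have "z0^2 + n > 0" using n by (smt (verit) zero_le_power2)
      then have "z0^2 * (n + 1) \<le> y0 * (z0^2 + n)" using D(3)
        by (simp add: divide_le_eq)
      then show ?thesis unfolding v_def A_def p_def psi_def using init by (simp add: algebra_simps)
    qed
    ultimately have "0 \<le> p s * exp (A s)" unfolding v_def by linarith
    then show ?thesis unfolding p_def by (simp add: zero_le_mult_iff)
  qed
  have ydec: "y t \<le> y0"
  proof -
    have "(\<lambda>s. - y s) 0 \<le> (\<lambda>s. - y s) t"
    proof (rule DERIV_nonneg_imp_increasing_open[OF t(1)])
      fix r assume r: "0 < r" "r < t"
      have "((\<lambda>s. - y s) has_real_derivative - fy n (y r) (z r)) (at r)"
        using r t by (auto intro!: derivative_eq_intros dy)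
      moreover have "- fy n (y r) (z r) \<ge> 0" using psipos[of r] r t by (simp add: fy_psi)
      ultimately show "\<exists>d. ((\<lambda>s. - y s) has_real_derivative d) (at r) \<and> 0 \<le> d" by auto
    next
      show "continuous_on {0..t} (\<lambda>s. - y s)"
        by (intro continuous_intros continuous_on_subset[OF cy]) (use t in auto)
    qed
    then show ?thesis using init by simp
  qed
  have pt: "psi n (y t) (z t) \<ge> 0" using psipos t by simp
  have y1: "y t < 1" using ydec D by simp
  have z2: "(z t)^2 * (n + 1 - y t) \<le> n * y t" using pt unfolding psi_def by simp
  have ypos: "y t > 0"
  proof -
    have "(z t)^2 * (n + 1 - y t) > 0" using zpos y1 n by simp
    then have "n * y t > 0" using z2 by linarith
    then show ?thesis using n by (simp add: zero_less_mult_iff)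
  qed
  have z1: "z t < 1"
  proof (rule ccontr)
    assume "\<not> z t < 1"
    then have "(z t)^2 \<ge> 1" by (simp add: one_le_power)
    then have "(z t)^2 * (n + 1 - y t) \<ge> 1 * (n + 1 - y t)" using y1 n
      by (intro mult_right_mono) auto
    then have "1 * (n + 1 - y t) \<le> n * y t" using z2 by (rule order_trans)
    moreover have "n * y t < n * 1" using y1 n by (intro mult_strict_left_mono)
    ultimately show False using y1 by argo
  qed
  show ?thesis using zpos pt ydec ypos y1 z1 by simp
qed



lemma cont_from_deriv:
  fixes y :: "real \<Rightarrow> real"
  assumes "\<And>t. t \<ge> 0 \<Longrightarrow> (y has_real_derivative F t) (at t within {0..})"
  shows "continuous_on {0..} y"
  using assms by (auto simp: continuous_on_eq_continuous_within intro!: DERIV_continuous)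

lemma inv_global:
  fixes n y0 z0 :: real and y z :: "real \<Rightarrow> real" and Fy Fz :: "real \<Rightarrow> real \<Rightarrow> real"
  assumes n: "n > 0"
    and D: "y0 > 0" "z0 > 0" "z0^2 * (n + 1) / (z0^2 + n) \<le> y0" "y0 < 1"
    and init: "y 0 = y0" "z 0 = z0"
    and FF: "\<And>a b. 0 \<le> a \<Longrightarrow> a \<le> 1 \<Longrightarrow> 0 \<le> b \<Longrightarrow> b \<le> 1 \<Longrightarrow> Fy a b = fy n a b \<and> Fz a b = fz n a b"
    and dy: "\<And>t. t \<ge> 0 \<Longrightarrow> (y has_real_derivative Fy (y t) (z t)) (at t within {0..})"
    and dz: "\<And>t. t \<ge> 0 \<Longrightarrow> (z has_real_derivative Fz (y t) (z t)) (at t within {0..})"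
    and t: "t \<ge> 0"
  shows "z t > 0 \<and> psi n (y t) (z t) \<ge> 0 \<and> y t \<le> y0 \<and> 0 < y t \<and> y t < 1 \<and> z t < 1"
proof -
  have cy: "continuous_on {0..} y" by (rule cont_from_deriv[OF dy])
  have cz: "continuous_on {0..} z" by (rule cont_from_deriv[OF dz])
  have core: "z t > 0 \<and> psi n (y t) (z t) \<ge> 0 \<and> y t \<le> y0 \<and> 0 < y t \<and> y t < 1 \<and> z t < 1"
    if T: "T \<ge> 0" and bx: "\<And>s. 0 \<le> s \<Longrightarrow> s < T \<Longrightarrow> 0 < y s \<and> y s < 1 \<and> 0 < z s \<and> z s < 1"
      and tt: "0 \<le> t" "t \<le> T" for T t
  proof (rule inv_core[where T=T and t=t and y=y and z=z])
    show "continuous_on {0..T} y" by (rule continuous_on_subset[OF cy]) auto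
    show "continuous_on {0..T} z" by (rule continuous_on_subset[OF cz]) auto
    fix s assume s: "0 < s" "s < T"
    have e: "Fy (y s) (z s) = fy n (y s) (z s) \<and> Fz (y s) (z s) = fz n (y s) (z s)"
      using bx[of s] s by (intro FF) auto
    show "(y has_real_derivative fy n (y s) (z s)) (at s)"
      using within_to_at[OF dy[of s]] e s by simp
    show "(z has_real_derivative fz n (y s) (z s)) (at s)"
      using within_to_at[OF dz[of s]] e s by simp
    show "y s \<le> n + 1" using bx[of s] s n by simp
  qed (use n D init T tt in auto)
  have allbox: "0 < y s \<and> y s < 1 \<and> 0 < z s \<and> z s < 1" if s: "s \<ge> 0" for s
  proof (rule ccontr)
    assume nb: "\<not> (0 < y s \<and> y s < 1 \<and> 0 < z s \<and> z s < 1)"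
    define S where "S = {0..s} \<inter> (\<lambda>r. (y r, z r)) -` (- ({0<..<1} \<times> {0<..<1}))"
    have memS: "r \<in> S \<longleftrightarrow> r \<in> {0..s} \<and> \<not> (0 < y r \<and> y r < 1 \<and> 0 < z r \<and> z r < 1)" for r
      unfolding S_def by auto
    have "closed S" unfolding S_def
    proof (rule continuous_closed_preimage)
      show "continuous_on {0..s} (\<lambda>r. (y r, z r))"
        by (intro continuous_intros continuous_on_subset[OF cy] continuous_on_subset[OF cz]) auto
      show "closed (- ({0<..<1::real} \<times> {0<..<1::real}))"
        by (intro closed_Compl open_Times open_greaterThanLessThan)
    qed auto
    moreover have "S \<noteq> {}" using memS[of s] nb s by auto
    moreover have bb: "bdd_below S" unfolding bdd_below_def using memS by auto
    ultimately have IS: "Inf S \<in> S" using closed_contains_Inf[of S] by blast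
    have "0 \<le> Inf S" using IS memS by auto
    moreover have "0 < y r \<and> y r < 1 \<and> 0 < z r \<and> z r < 1" if "0 \<le> r" "r < Inf S" for r
    proof (rule ccontr)
      assume "\<not> ?thesis"
      then have "r \<in> S" using memS that IS by auto
      then have "Inf S \<le> r" using bb by (rule cInf_lower)
      then show False using that by simp
    qed
    ultimately have "z (Inf S) > 0 \<and> psi n (y (Inf S)) (z (Inf S)) \<ge> 0 \<and> y (Inf S) \<le> y0 \<and> 0 < y (Inf S) \<and> y (Inf S) < 1 \<and> z (Inf S) < 1"
      by (intro core) auto
    then show False using IS memS by auto
  qed
  show ?thesis by (rule core[of t t]) (use t allbox in auto)
qed



lemma bound_E:
  fixes n Y Z :: real
  assumes n: "n > 0" and Y: "0 < Y" "Y < 1" and Z: "0 < Z" "Z < 1" and P: "psi n Y Z \<ge> 0"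
  shows "n * fy n Y Z - 2 * Z * fz n Y Z * (n + 1 - Y) + Z^2 * fy n Y Z \<ge> - ((n+1)*(n+2))"
proof -
  define h where "h = ((n+1)*Y - 1)/n - Z^2"
  have E: "n * fy n Y Z - 2 * Z * fz n Y Z * (n + 1 - Y) + Z^2 * fy n Y Z
      = - ((n + Z^2) * psi n Y Z) - 2 * (Z^2 * (n+1-Y) * h)"
    unfolding fy_def fz_def psi_def h_def using n
    by (simp add: field_simps power2_eq_square)
  have Z2: "Z^2 \<le> 1" "0 \<le> Z^2" using Z by (auto simp: power_le_one)
  have psin: "psi n Y Z \<le> n"
  proof -
    have "0 \<le> Z^2 * (n + 1 - Y)" using Z2 Y n by (intro mult_nonneg_nonneg) auto
    moreover have "n * Y \<le> n * 1" using n Y by (intro mult_left_mono) auto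
    ultimately show ?thesis unfolding psi_def by argo
  qed
  have t1: "(n + Z^2) * psi n Y Z \<le> (n+1) * n"
    by (rule mult_mono) (use Z2 psin P n in auto)
  have h1: "h \<le> 1"
  proof -
    have hh: "n * Y < n * 1" by (rule mult_strict_left_mono) (use n Y in auto)
    have e: "(n+1)*Y = n * Y + Y" by (simp add: algebra_simps)
    have "(n+1)*Y - 1 \<le> n" using hh Y unfolding e by linarith
    then have "((n+1)*Y - 1)/n \<le> 1" using n by (simp add: divide_le_eq)
    then show ?thesis unfolding h_def using Z2(2) by linarith
  qed
  have q0: "0 \<le> Z^2 * (n+1-Y)" using Z2 Y n by (intro mult_nonneg_nonneg) auto
  have q1: "Z^2 * (n+1-Y) \<le> 1 * (n+1)" by (rule mult_mono) (use Z2 Y n in auto)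
  have t2: "Z^2 * (n+1-Y) * h \<le> Z^2 * (n+1-Y) * 1" by (rule mult_left_mono[OF h1 q0])
  show ?thesis unfolding E using t1 t2 q1 by (simp add: algebra_simps)
qed

lemma bracket_neg:
  fixes n L :: real assumes n: "n > 0" and L: "0 \<le> L" "L < 1"
  shows "((n+1)*L - 1)/n - n*L/(n+1-L) < 0"
proof -
  have d: "n + 1 - L > 0" using n L by simp
  have "((n+1)*L - 1)/n - n*L/(n+1-L) = - ((n+1)*(L-1)^2) / (n*(n+1-L))"
    using n d by (simp add: field_simps power2_eq_square)
  moreover have "(n+1)*(L-1)^2 > 0" using n L by simp
  ultimately show ?thesis using n d by (simp add: divide_pos_pos)
qed

lemma converge:
  fixes n y0 z0 :: real and y z :: "real \<Rightarrow> real"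
  assumes n: "n > 0"
    and D: "y0 > 0" "z0 > 0" "z0^2 * (n + 1) / (z0^2 + n) \<le> y0" "y0 < 1"
    and sol: "global_solution n y0 z0 y z"
  shows "(y \<longlongrightarrow> 0) at_top \<and> (z \<longlongrightarrow> 0) at_top"
proof -
  have init: "y 0 = y0" "z 0 = z0" using sol unfolding global_solution_def by auto
  have dyw: "\<And>t. t \<ge> 0 \<Longrightarrow> (y has_real_derivative fy n (y t) (z t)) (at t within {0..})"
    and dzw: "\<And>t. t \<ge> 0 \<Longrightarrow> (z has_real_derivative fz n (y t) (z t)) (at t within {0..})"
    using sol unfolding global_solution_def by auto
  have inv: "z t > 0 \<and> psi n (y t) (z t) \<ge> 0 \<and> y t \<le> y0 \<and> 0 < y t \<and> y t < 1 \<and> z t < 1" if "t \<ge> 0" for t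
    by (rule inv_global[OF n D init _ dyw dzw that]) auto
  have dy: "(y has_real_derivative fy n (y t) (z t)) (at t)" if "t > 0" for t
    using within_to_at[OF dyw that] that by simp
  have dz: "(z has_real_derivative fz n (y t) (z t)) (at t)" if "t > 0" for t
    using within_to_at[OF dzw that] that by simp
  have cy: "continuous_on {0..} y" by (rule cont_from_deriv[OF dyw])
  have cz: "continuous_on {0..} z" by (rule cont_from_deriv[OF dzw])
  define P where "P t = psi n (y t) (z t)" for t
  have cP: "continuous_on {0..} P" unfolding P_def psi_def by (intro continuous_intros cy cz)
  have dP: "(P has_real_derivative (n * fy n (y t) (z t) - 2 * z t * fz n (y t) (z t) * (n + 1 - y t) + (z t)^2 * fy n (y t) (z t))) (at t)"
    if "t > 0" for t
    unfolding P_def psi_def using that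
    by (auto intro!: derivative_eq_intros dy dz simp: algebra_simps)
  have ymono: "y t \<le> y s" if "0 \<le> s" "s \<le> t" for s t
  proof -
    have "(\<lambda>r. - y r) s \<le> (\<lambda>r. - y r) t"
    proof (rule DERIV_nonneg_imp_increasing_open[OF that(2)])
      fix r assume r: "s < r" "r < t"
      have "((\<lambda>s. - y s) has_real_derivative - fy n (y r) (z r)) (at r)"
        using r that by (auto intro!: derivative_eq_intros dy)
      moreover have "- fy n (y r) (z r) \<ge> 0" using inv[of r] r that by (simp add: fy_psi)
      ultimately show "\<exists>d. ((\<lambda>s. - y s) has_real_derivative d) (at r) \<and> 0 \<le> d" by auto
    next
      show "continuous_on {s..t} (\<lambda>r. - y r)"
        by (intro continuous_intros continuous_on_subset[OF cy]) (use that in auto)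
    qed
    then show ?thesis by simp
  qed
  define L where "L = Inf (y ` {0..})"
  have bb: "bdd_below (y ` {0..})" unfolding bdd_below_def using inv by (auto intro!: exI[of _ 0] less_imp_le)
  have Lle: "L \<le> y t" if "t \<ge> 0" for t unfolding L_def by (rule cInf_lower[OF _ bb]) (use that in auto)
  have L0: "L \<ge> 0" unfolding L_def by (rule cInf_greatest) (use inv in \<open>auto intro: less_imp_le\<close>)
  have L1: "L < 1" using Lle[of 0] init D by simp
  have ylim: "(y \<longlongrightarrow> L) at_top"
  proof (rule order_tendstoI)
    fix a assume a: "a < L"
    have "a < y t" if "t \<ge> 0" for t using Lle[OF that] a by linarith
    then show "eventually (\<lambda>t. a < y t) at_top"
      unfolding eventually_at_top_linorder by blast
  next
    fix a assume a: "L < a"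
    then obtain t0 where t0: "t0 \<ge> 0" "y t0 < a" unfolding L_def
      using cInf_less_iff[OF _ bb] by auto
    have "y t < a" if "t \<ge> t0" for t using ymono[of t0 t] that t0 by linarith
    then show "eventually (\<lambda>t. y t < a) at_top"
      unfolding eventually_at_top_linorder by blast
  qed
  define M where "M = (n+1)*(n+2)"
  have M: "M > 0" unfolding M_def using n by simp
  have Plip: "P (t + r) \<ge> P t - M * r" if "t > 0" "r \<ge> 0" for t r
  proof -
    have "(\<lambda>s. P s + M * s) t \<le> (\<lambda>s. P s + M * s) (t + r)"
    proof (rule DERIV_nonneg_imp_increasing_open[where f="\<lambda>s. P s + M * s"])
      show "t \<le> t + r" using that by simp
      fix s assume s: "t < s" "s < t + r"
      have "((\<lambda>s. P s + M * s) has_real_derivative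
          (n * fy n (y s) (z s) - 2 * z s * fz n (y s) (z s) * (n + 1 - y s) + (z s)^2 * fy n (y s) (z s)) + M * 1) (at s)"
        using s that by (auto intro!: derivative_eq_intros dP)
      moreover have "(n * fy n (y s) (z s) - 2 * z s * fz n (y s) (z s) * (n + 1 - y s) + (z s)^2 * fy n (y s) (z s)) \<ge> - M"
        unfolding M_def using inv[of s] s that by (intro bound_E n) auto
      ultimately show "\<exists>d. ((\<lambda>s. P s + M * s) has_real_derivative d) (at s) \<and> 0 \<le> d" by force
    next
      show "continuous_on {t..t+r} (\<lambda>s. P s + M * s)"
        by (intro continuous_intros continuous_on_subset[OF cP]) (use that in auto)
    qed
    then show ?thesis by (simp add: algebra_simps)
  qed
  have ydrop: "y (t + r) \<le> y t - c * r" if "t > 0" "r \<ge> 0" "\<And>s. t \<le> s \<Longrightarrow> s \<le> t + r \<Longrightarrow> P s \<ge> c" for t r c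
  proof -
    have "(\<lambda>s. - y s - c * s) t \<le> (\<lambda>s. - y s - c * s) (t + r)"
    proof (rule DERIV_nonneg_imp_increasing_open[where f="\<lambda>s. - y s - c * s"])
      show "t \<le> t + r" using that by simp
      fix s assume s: "t < s" "s < t + r"
      have "((\<lambda>s. - y s - c * s) has_real_derivative - fy n (y s) (z s) - c * 1) (at s)"
        using s that by (auto intro!: derivative_eq_intros dy)
      moreover have "- fy n (y s) (z s) - c * 1 \<ge> 0" using that(3)[of s] s unfolding P_def fy_psi by simp
      ultimately show "\<exists>d. ((\<lambda>s. - y s - c * s) has_real_derivative d) (at s) \<and> 0 \<le> d" by blast
    next
      show "continuous_on {t..t+r} (\<lambda>s. - y s - c * s)"
        by (intro continuous_intros continuous_on_subset[OF cy]) (use that in auto)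
    qed
    then show ?thesis by (simp add: algebra_simps)
  qed
  have Plim: "(P \<longlongrightarrow> 0) at_top"
  proof (rule order_tendstoI)
    fix a :: real assume a: "a < 0"
    have "a < P t" if "t \<ge> 0" for t using inv[OF that] a unfolding P_def by linarith
    then show "eventually (\<lambda>t. a < P t) at_top"
      unfolding eventually_at_top_linorder by blast
  next
    fix e :: real assume e: "0 < e"
    define r where "r = e / (2 * M)"
    have r: "r > 0" unfolding r_def using e M by simp
    have "eventually (\<lambda>t. y t < L + e / 2 * r) at_top"
      using ylim e r by (auto simp: order_tendsto_iff)
    moreover have "eventually (\<lambda>t::real. t > 0) at_top" by (rule eventually_gt_at_top)
    ultimately show "eventually (\<lambda>t. P t < e) at_top"
    proof eventually_elim
      case (elim t)
      show ?case
      proof (rule ccontr)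
        assume "\<not> P t < e"
        then have Pt: "P t \<ge> e" by simp
        have "P s \<ge> e / 2" if "t \<le> s" "s \<le> t + r" for s
        proof -
          have "P (t + (s - t)) \<ge> P t - M * (s - t)" using Plip[of t "s - t"] elim that by simp
          moreover have "M * (s - t) \<le> M * r" using that M by simp
          moreover have "M * r = e / 2" unfolding r_def using M by simp
          ultimately show ?thesis using Pt by simp
        qed
        then have "y (t + r) \<le> y t - e / 2 * r" using ydrop[of t r "e/2"] elim r by simp
        then have "y (t + r) < L" using elim by simp
        then show False using Lle[of "t + r"] elim r by simp
      qed
    qed
  qed
  define \<zeta> where "\<zeta> = sqrt (n * L / (n + 1 - L))"
  have zeq: "z t = sqrt ((n * y t - P t) / (n + 1 - y t))" if "t \<ge> 0" for t
  proof -
    have d: "n + 1 - y t > 0" using inv[OF that] n by simp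
    have "(z t)^2 = (n * y t - P t) / (n + 1 - y t)"
      using d unfolding P_def psi_def by (simp add: field_simps)
    then show ?thesis using inv[OF that] by (metis abs_of_pos real_sqrt_abs)
  qed
  have zlim: "(z \<longlongrightarrow> \<zeta>) at_top"
  proof -
    have "((\<lambda>t. sqrt ((n * y t - P t) / (n + 1 - y t))) \<longlongrightarrow> sqrt ((n * L - 0) / (n + 1 - L))) at_top"
      using L1 n by (intro tendsto_intros ylim Plim) auto
    moreover have "eventually (\<lambda>t. sqrt ((n * y t - P t) / (n + 1 - y t)) = z t) at_top"
    proof -
      have "\<forall>t\<ge>0. sqrt ((n * y t - P t) / (n + 1 - y t)) = z t" using zeq by simp
      then show ?thesis unfolding eventually_at_top_linorder by blast
    qed
    ultimately show ?thesis unfolding \<zeta>_def by (simp add: tendsto_cong)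
  qed
  have fzlim: "((\<lambda>t. fz n (y t) (z t)) \<longlongrightarrow> fz n L \<zeta>) at_top"
    unfolding fz_def by (intro tendsto_intros ylim zlim)
  have c0: "fz n L \<zeta> = 0"
  proof (rule ccontr)
    define c where "c = fz n L \<zeta>"
    assume "fz n L \<zeta> \<noteq> 0"
    then have c: "\<bar>c\<bar> > 0" unfolding c_def by simp
    have "eventually (\<lambda>t. dist (fz n (y t) (z t)) c < \<bar>c\<bar>/2) at_top"
      using tendstoD[OF fzlim, of "\<bar>c\<bar>/2"] c unfolding c_def by simp
    then obtain T1 where T1: "\<And>t. t \<ge> T1 \<Longrightarrow> \<bar>fz n (y t) (z t) - c\<bar> < \<bar>c\<bar>/2"
      unfolding eventually_at_top_linorder dist_real_def by blast
    have sh: "filterlim (\<lambda>t::real. t + 1) at_top at_top"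
      by (rule filterlim_tendsto_add_at_top[OF tendsto_const filterlim_ident, of 1, unfolded add.commute[of 1]])
    have "((\<lambda>t. z (t + 1) - z t) \<longlongrightarrow> \<zeta> - \<zeta>) at_top"
      by (intro tendsto_intros filterlim_compose[OF zlim sh] zlim)
    then have "eventually (\<lambda>t. dist (z (t + 1) - z t) 0 < \<bar>c\<bar>/2) at_top"
      using c by (auto dest: tendstoD[of _ 0 _ "\<bar>c\<bar>/2"])
    then obtain T2 where T2: "\<And>t. t \<ge> T2 \<Longrightarrow> \<bar>z (t + 1) - z t\<bar> < \<bar>c\<bar>/2"
      unfolding eventually_at_top_linorder dist_real_def by auto
    define t where "t = max (max T1 T2) 1"
    have "\<exists>\<xi>. t < \<xi> \<and> \<xi> < t + 1 \<and> z (t + 1) - z t = (t + 1 - t) * fz n (y \<xi>) (z \<xi>)"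
      by (rule MVT2) (auto intro!: dz simp: t_def)
    then obtain \<xi> where xi: "t < \<xi>" "z (t + 1) - z t = fz n (y \<xi>) (z \<xi>)" by auto
    have "\<bar>fz n (y \<xi>) (z \<xi>) - c\<bar> < \<bar>c\<bar>/2" using T1[of \<xi>] xi unfolding t_def by simp
    moreover have "\<bar>fz n (y \<xi>) (z \<xi>)\<bar> < \<bar>c\<bar>/2" using T2[of t] xi unfolding t_def by simp
    ultimately show False by linarith
  qed
  have Lz: "L = 0"
  proof (rule ccontr)
    assume "L \<noteq> 0"
    then have Lp: "L > 0" using L0 by simp
    have d: "n + 1 - L > 0" using L1 n by simp
    have zp: "\<zeta> > 0" unfolding \<zeta>_def using Lp d n by simp
    have z2: "\<zeta>^2 = n * L / (n + 1 - L)" unfolding \<zeta>_def using Lp d n by simp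
    have "fz n L \<zeta> = \<zeta> * (((n+1)*L - 1)/n - n * L / (n + 1 - L))"
      using fz_alt[of n L \<zeta>] n z2 by simp
    moreover have "((n+1)*L - 1)/n - n * L / (n + 1 - L) < 0" by (rule bracket_neg[OF n L0 L1])
    ultimately have "fz n L \<zeta> < 0" using zp by (simp add: mult_pos_neg)
    then show False using c0 by simp
  qed
  show ?thesis using ylim zlim Lz unfolding \<zeta>_def by simp
qed



definition clamp :: "real \<Rightarrow> real" where "clamp x = max 0 (min 1 x)"

lemma clamp_bounds: "0 \<le> clamp x" "clamp x \<le> 1" unfolding clamp_def by auto
lemma clamp_id: "0 \<le> x \<Longrightarrow> x \<le> 1 \<Longrightarrow> clamp x = x" unfolding clamp_def by auto
lemma clamp_lip: "\<bar>clamp x - clamp x'\<bar> \<le> \<bar>x - x'\<bar>" unfolding clamp_def by auto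
lemma continuous_on_clamp: "continuous_on S clamp"
  unfolding clamp_def by (intro continuous_intros)

lemma abs_prod_le: fixes x y A B :: real
  assumes "\<bar>x\<bar> \<le> A" "\<bar>y\<bar> \<le> B" shows "\<bar>x * y\<bar> \<le> A * B"
  unfolding abs_mult by (rule mult_mono) (use assms in auto)

lemma lip_fy:
  fixes n a b a' b' :: real
  assumes n: "n \<ge> 1" and ab: "0 \<le> a" "a \<le> 1" "0 \<le> b" "b \<le> 1" "0 \<le> a'" "a' \<le> 1" "0 \<le> b'" "b' \<le> 1"
  shows "\<bar>fy n a b - fy n a' b'\<bar> \<le> 5 * (n + 1) * (\<bar>a - a'\<bar> + \<bar>b - b'\<bar>)"
proof -
  have e: "fy n a b - fy n a' b' = (b - b') * (b + b') * (n + 1 - a) + b'^2 * (a' - a) - n * (a - a')"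
    unfolding fy_def by (simp add: algebra_simps power2_eq_square)
  have t1: "\<bar>(b - b') * (b + b') * (n + 1 - a)\<bar> \<le> \<bar>b - b'\<bar> * 2 * (n + 1)"
    by (intro abs_prod_le) (use ab n in auto)
  have t2: "\<bar>b'^2 * (a' - a)\<bar> \<le> 1 * \<bar>a - a'\<bar>"
    by (intro abs_prod_le) (use ab in \<open>auto simp: power_le_one abs_minus_commute\<close>)
  have t3: "\<bar>n * (a - a')\<bar> = n * \<bar>a - a'\<bar>" using n by (simp add: abs_mult)
  have "\<bar>fy n a b - fy n a' b'\<bar> \<le> \<bar>b - b'\<bar> * 2 * (n + 1) + 1 * \<bar>a - a'\<bar> + n * \<bar>a - a'\<bar>"
    unfolding e using t1 t2 t3 by linarith
  also have "\<dots> \<le> 5 * (n + 1) * (\<bar>a - a'\<bar> + \<bar>b - b'\<bar>)"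
    using n by (simp add: algebra_simps)
  finally show ?thesis .
qed

lemma lip_fz:
  fixes n a b a' b' :: real
  assumes n: "n \<ge> 1" and ab: "0 \<le> a" "a \<le> 1" "0 \<le> b" "b \<le> 1" "0 \<le> a'" "a' \<le> 1" "0 \<le> b'" "b' \<le> 1"
  shows "\<bar>fz n a b - fz n a' b'\<bar> \<le> 5 * (n + 1) * (\<bar>a - a'\<bar> + \<bar>b - b'\<bar>)"
proof -
  define K where "K = (n + 1) / n"
  have K: "K \<le> 2" "0 \<le> K" "K * n = n + 1" unfolding K_def using n by (auto simp: field_simps)
  have e: "fz n a b - fz n a' b' = K * ((b - b') * (n - 1 + a) + b' * (a - a')) - n * (b - b') - (b - b') * (b^2 + b * b' + b'^2)"
    unfolding fz_def K_def using n by (simp add: field_simps power2_eq_square power3_eq_cube; algebra)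
  have t1: "\<bar>(b - b') * (n - 1 + a)\<bar> \<le> \<bar>b - b'\<bar> * n" by (intro abs_prod_le) (use ab n in auto)
  have t2: "\<bar>b' * (a - a')\<bar> \<le> 1 * \<bar>a - a'\<bar>" by (intro abs_prod_le) (use ab in auto)
  have t12: "\<bar>K * ((b - b') * (n - 1 + a) + b' * (a - a'))\<bar> \<le> K * (\<bar>b - b'\<bar> * n + 1 * \<bar>a - a'\<bar>)"
  proof -
    have "\<bar>(b - b') * (n - 1 + a) + b' * (a - a')\<bar> \<le> \<bar>b - b'\<bar> * n + 1 * \<bar>a - a'\<bar>"
      using abs_triangle_ineq[of "(b - b') * (n - 1 + a)" "b' * (a - a')"] t1 t2 by linarith
    then have "K * \<bar>(b - b') * (n - 1 + a) + b' * (a - a')\<bar> \<le> K * (\<bar>b - b'\<bar> * n + 1 * \<bar>a - a'\<bar>)"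
      using K(2) by (rule mult_left_mono)
    then show ?thesis using K(2) by (simp add: abs_mult)
  qed
  have t12': "K * (\<bar>b - b'\<bar> * n + 1 * \<bar>a - a'\<bar>) \<le> (n + 1) * \<bar>b - b'\<bar> + 2 * \<bar>a - a'\<bar>"
  proof -
    have "K * (\<bar>b - b'\<bar> * n + 1 * \<bar>a - a'\<bar>) = (K * n) * \<bar>b - b'\<bar> + K * \<bar>a - a'\<bar>" by (simp add: algebra_simps)
    also have "\<dots> \<le> (n + 1) * \<bar>b - b'\<bar> + 2 * \<bar>a - a'\<bar>" using K by (simp add: mult_right_mono)
    finally show ?thesis .
  qed
  have t3: "\<bar>n * (b - b')\<bar> = n * \<bar>b - b'\<bar>" using n by (simp add: abs_mult)
  have t4: "\<bar>(b - b') * (b^2 + b * b' + b'^2)\<bar> \<le> \<bar>b - b'\<bar> * 3"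
  proof (rule abs_prod_le)
    have "b^2 \<le> 1" "b'^2 \<le> 1" "b * b' \<le> 1" using ab by (auto simp: power_le_one mult_le_one)
    moreover have "0 \<le> b^2 + b * b' + b'^2" using ab by simp
    ultimately show "\<bar>b^2 + b * b' + b'^2\<bar> \<le> 3" by simp
  qed simp
  have "\<bar>fz n a b - fz n a' b'\<bar> \<le> (n + 1) * \<bar>b - b'\<bar> + 2 * \<bar>a - a'\<bar> + n * \<bar>b - b'\<bar> + \<bar>b - b'\<bar> * 3"
    unfolding e using t12 t12' t3 t4 by linarith
  also have "\<dots> \<le> 5 * (n + 1) * (\<bar>a - a'\<bar> + \<bar>b - b'\<bar>)"
    using n by (simp add: algebra_simps)
  finally show ?thesis .
qed

definition GG :: "real \<Rightarrow> real \<times> real \<Rightarrow> real \<times> real" where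
  "GG n p = (fy n (clamp (fst p)) (clamp (snd p)), fz n (clamp (fst p)) (clamp (snd p)))"

lemma GG_lip:
  assumes n: "n \<ge> 1"
  shows "dist (GG n p) (GG n q) \<le> 20 * (n + 1) * dist p q"
proof -
  let ?a = "clamp (fst p)" and ?b = "clamp (snd p)" and ?a' = "clamp (fst q)" and ?b' = "clamp (snd q)"
  have s: "\<bar>?a - ?a'\<bar> + \<bar>?b - ?b'\<bar> \<le> 2 * dist p q"
  proof -
    have "\<bar>?a - ?a'\<bar> \<le> dist p q" using clamp_lip[of "fst p" "fst q"] dist_fst_le[of p q]
      by (simp add: dist_real_def)
    moreover have "\<bar>?b - ?b'\<bar> \<le> dist p q" using clamp_lip[of "snd p" "snd q"] dist_snd_le[of p q]
      by (simp add: dist_real_def)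
    ultimately show ?thesis by simp
  qed
  have "dist (GG n p) (GG n q) \<le> \<bar>fy n ?a ?b - fy n ?a' ?b'\<bar> + \<bar>fz n ?a ?b - fz n ?a' ?b'\<bar>"
    unfolding GG_def dist_Pair_Pair dist_real_def using sqrt_sum_squares_le_sum_abs by simp
  also have "\<dots> \<le> 5 * (n + 1) * (\<bar>?a - ?a'\<bar> + \<bar>?b - ?b'\<bar>) + 5 * (n + 1) * (\<bar>?a - ?a'\<bar> + \<bar>?b - ?b'\<bar>)"
    by (intro add_mono lip_fy lip_fz n clamp_bounds)
  also have "\<dots> = 10 * (n + 1) * (\<bar>?a - ?a'\<bar> + \<bar>?b - ?b'\<bar>)" by simp
  also have "\<dots> \<le> 10 * (n + 1) * (2 * dist p q)" using s n by (intro mult_left_mono) auto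
  finally show ?thesis by (simp add: algebra_simps)
qed

lemma GG_bound:
  assumes n: "n \<ge> 1"
  shows "norm (GG n p) \<le> 20 * (n + 1)"
proof -
  let ?a = "clamp (fst p)" and ?b = "clamp (snd p)"
  have z: "fy n 0 0 = 0" "fz n 0 0 = 0" unfolding fy_def fz_def by simp_all
  have s: "\<bar>?a - 0\<bar> + \<bar>?b - 0\<bar> \<le> 2" using clamp_bounds[of "fst p"] clamp_bounds[of "snd p"] by simp
  have "norm (GG n p) \<le> \<bar>fy n ?a ?b - fy n 0 0\<bar> + \<bar>fz n ?a ?b - fz n 0 0\<bar>"
    unfolding GG_def z using norm_Pair_le[of "fy n ?a ?b" "fz n ?a ?b"] by simp
  also have "\<dots> \<le> 5 * (n + 1) * (\<bar>?a - 0\<bar> + \<bar>?b - 0\<bar>) + 5 * (n + 1) * (\<bar>?a - 0\<bar> + \<bar>?b - 0\<bar>)"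
    by (intro add_mono lip_fy lip_fz n clamp_bounds) auto
  also have "\<dots> = 10 * (n + 1) * (\<bar>?a - 0\<bar> + \<bar>?b - 0\<bar>)" by simp
  also have "\<dots> \<le> 10 * (n + 1) * 2" using s n by (intro mult_left_mono) auto
  finally show ?thesis by simp
qed

lemma continuous_on_GG: "continuous_on S (GG n)"
  unfolding GG_def fy_def fz_def
  by (intro continuous_intros continuous_on_compose2[OF continuous_on_clamp] ) auto



definition gfun :: "real \<Rightarrow> real \<Rightarrow> (real \<Rightarrow>\<^sub>C (real \<times> real)) \<Rightarrow> real \<Rightarrow> real \<times> real" where
  "gfun n k u s = GG n (exp (k * s) *\<^sub>R apply_bcontfun u s)"

definition Phif :: "real \<Rightarrow> real \<Rightarrow> real \<times> real \<Rightarrow> (real \<Rightarrow>\<^sub>C (real \<times> real)) \<Rightarrow> real \<Rightarrow> real \<times> real" where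
  "Phif n k x0 u t = exp (- (k * max 0 t)) *\<^sub>R (x0 + integral {0..max 0 t} (gfun n k u))"

lemma cont_gfun: "continuous_on S (gfun n k u)"
  unfolding gfun_def
  by (rule continuous_on_compose2[OF continuous_on_GG[of UNIV]]) (auto intro!: continuous_intros)

lemma cont_I: "continuous_on {0..} (\<lambda>\<tau>. integral {0..\<tau>} (gfun n k u))"
proof -
  have "continuous (at t within {0..}) (\<lambda>\<tau>. integral {0..\<tau>} (gfun n k u))" if "t \<in> {0..}" for t
    by (rule has_vector_derivative_continuous, rule indef_int_deriv[OF cont_gfun]) (use that in auto)
  then show ?thesis by (simp add: continuous_on_eq_continuous_within)
qed

lemma norm_I:
  assumes n: "n \<ge> 1" and t: "\<tau> \<ge> 0"
  shows "norm (integral {0..\<tau>} (gfun n k u)) \<le> 20 * (n + 1) * \<tau>"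
proof -
  have gb: "norm (gfun n k u s) \<le> 20 * (n + 1)" for s unfolding gfun_def by (rule GG_bound[OF n])
  have "norm (integral {0..\<tau>} (gfun n k u)) \<le> integral {0..\<tau>} (\<lambda>_. 20 * (n + 1))"
    by (rule integral_norm_bound_integral[OF _ _ gb])
       (auto intro!: integrable_continuous_interval cont_gfun)
  also have "\<dots> = 20 * (n + 1) * \<tau>" using t by simp
  finally show ?thesis .
qed

lemma exp_tau: fixes k \<tau> :: real assumes "k > 0" "\<tau> \<ge> 0" shows "exp (- (k * \<tau>)) * \<tau> \<le> 1 / k"
proof -
  have "k * \<tau> \<le> exp (k * \<tau>)" using exp_ge_add_one_self[of "k * \<tau>"] by linarith
  then have "k * \<tau> * exp (- (k * \<tau>)) \<le> exp (k * \<tau>) * exp (- (k * \<tau>))"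
    by (rule mult_right_mono) simp
  also have "\<dots> = 1" by (simp add: exp_minus field_simps)
  finally show ?thesis using assms by (simp add: field_simps)
qed

lemma Phif_bcontfun:
  assumes n: "n \<ge> 1" and k: "k > 0"
  shows "Phif n k x0 u \<in> bcontfun"
proof (rule bcontfun_normI)
  show "continuous_on UNIV (Phif n k x0 u)" unfolding Phif_def
    by (intro continuous_intros continuous_on_compose2[OF cont_I]) auto
next
  fix t :: real
  define \<tau> where "\<tau> = max 0 t"
  have tau: "\<tau> \<ge> 0" unfolding \<tau>_def by simp
  have "norm (Phif n k x0 u t) = exp (- (k * \<tau>)) * norm (x0 + integral {0..\<tau>} (gfun n k u))"
    unfolding Phif_def \<tau>_def by simp
  also have "\<dots> \<le> exp (- (k * \<tau>)) * (norm x0 + 20 * (n + 1) * \<tau>)"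
    by (intro mult_left_mono order.trans[OF norm_triangle_ineq] add_left_mono norm_I n tau) simp
  also have "\<dots> = exp (- (k * \<tau>)) * norm x0 + 20 * (n + 1) * (exp (- (k * \<tau>)) * \<tau>)"
    by (simp add: algebra_simps)
  also have "\<dots> \<le> 1 * norm x0 + 20 * (n + 1) * (1 / k)"
    using k tau n by (intro add_mono mult_right_mono mult_left_mono exp_tau) auto
  finally show "norm (Phif n k x0 u t) \<le> norm x0 + 20 * (n + 1) / k" by simp
qed

lemma int_exp:
  fixes C k \<tau> :: real assumes k: "k > 0" and t: "\<tau> \<ge> 0"
  shows "integral {0..\<tau>} (\<lambda>s. C * exp (k * s)) = C * (exp (k * \<tau>) - 1) / k"
proof -
  have "((\<lambda>s. C * exp (k * s)) has_integral ((\<lambda>s. C * exp (k * s) / k) \<tau> - (\<lambda>s. C * exp (k * s) / k) 0)) {0..\<tau>}"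
  proof (rule fundamental_theorem_of_calculus[OF t])
    fix s assume "s \<in> {0..\<tau>}"
    have "((\<lambda>s. C * exp (k * s) / k) has_real_derivative C * (exp (k * s) * (k * 1)) / k) (at s within {0..\<tau>})"
      using k by (intro derivative_eq_intros) auto
    moreover have "C * (exp (k * s) * (k * 1)) / k = C * exp (k * s)" using k by simp
    ultimately show "((\<lambda>s. C * exp (k * s) / k) has_vector_derivative C * exp (k * s)) (at s within {0..\<tau>})"
      by (simp add: has_real_derivative_iff_has_vector_derivative)
  qed
  then have "integral {0..\<tau>} (\<lambda>s. C * exp (k * s)) = (\<lambda>s. C * exp (k * s) / k) \<tau> - (\<lambda>s. C * exp (k * s) / k) 0"
    by (rule integral_unique)
  also have "\<dots> = C * (exp (k * \<tau>) - 1) / k" by (simp add: diff_divide_distrib right_diff_distrib)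
  finally show ?thesis .
qed

lemma Phif_contr:
  assumes n: "n \<ge> 1" and k: "k = 40 * (n + 1)"
  shows "dist (Phif n k x0 u t) (Phif n k x0 v t) \<le> 1/2 * dist u v"
proof -
  define \<tau> where "\<tau> = max 0 t"
  have tau: "\<tau> \<ge> 0" unfolding \<tau>_def by simp
  have kp: "k > 0" using k n by simp
  define d where "d = dist u v"
  have d: "d \<ge> 0" unfolding d_def by simp
  have intg: "gfun n k w integrable_on {0..\<tau>}" for w
    by (intro integrable_continuous_interval cont_gfun)
  have "Phif n k x0 u t - Phif n k x0 v t = exp (- (k * \<tau>)) *\<^sub>R (integral {0..\<tau>} (gfun n k u) - integral {0..\<tau>} (gfun n k v))"
    unfolding Phif_def \<tau>_def by (simp add: algebra_simps)
  also have "integral {0..\<tau>} (gfun n k u) - integral {0..\<tau>} (gfun n k v) = integral {0..\<tau>} (\<lambda>s. gfun n k u s - gfun n k v s)"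
    by (rule integral_diff[symmetric, OF intg intg])
  finally have eq: "Phif n k x0 u t - Phif n k x0 v t = exp (- (k * \<tau>)) *\<^sub>R integral {0..\<tau>} (\<lambda>s. gfun n k u s - gfun n k v s)" .
  have pw: "norm (gfun n k u s - gfun n k v s) \<le> 20 * (n + 1) * d * exp (k * s)" for s
  proof -
    have a1: "norm (gfun n k u s - gfun n k v s) \<le> 20 * (n + 1) * dist (exp (k * s) *\<^sub>R apply_bcontfun u s) (exp (k * s) *\<^sub>R apply_bcontfun v s)"
      unfolding gfun_def dist_norm[symmetric] by (rule GG_lip[OF n])
    have a2: "dist (exp (k * s) *\<^sub>R apply_bcontfun u s) (exp (k * s) *\<^sub>R apply_bcontfun v s) = exp (k * s) * dist (apply_bcontfun u s) (apply_bcontfun v s)"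
      by (simp add: dist_norm scaleR_diff_right[symmetric])
    have a3: "exp (k * s) * dist (apply_bcontfun u s) (apply_bcontfun v s) \<le> exp (k * s) * d"
      unfolding d_def by (intro mult_left_mono dist_bounded) auto
    have a4: "20 * (n + 1) * (exp (k * s) * dist (apply_bcontfun u s) (apply_bcontfun v s)) \<le> 20 * (n + 1) * (exp (k * s) * d)"
      using a3 n by (intro mult_left_mono) auto
    show ?thesis using a1 a4 unfolding a2 by (simp add: algebra_simps)
  qed
  have "norm (integral {0..\<tau>} (\<lambda>s. gfun n k u s - gfun n k v s)) \<le> integral {0..\<tau>} (\<lambda>s. 20 * (n + 1) * d * exp (k * s))"
    by (rule integral_norm_bound_integral[OF _ _ pw])
       (auto intro!: integrable_continuous_interval continuous_intros cont_gfun)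
  also have "\<dots> = 20 * (n + 1) * d * (exp (k * \<tau>) - 1) / k" by (rule int_exp[OF kp tau])
  finally have ib: "norm (integral {0..\<tau>} (\<lambda>s. gfun n k u s - gfun n k v s)) \<le> 20 * (n + 1) * d * (exp (k * \<tau>) - 1) / k" .
  have "dist (Phif n k x0 u t) (Phif n k x0 v t) = exp (- (k * \<tau>)) * norm (integral {0..\<tau>} (\<lambda>s. gfun n k u s - gfun n k v s))"
    by (simp add: dist_norm eq)
  also have "\<dots> \<le> exp (- (k * \<tau>)) * (20 * (n + 1) * d * (exp (k * \<tau>) - 1) / k)"
    by (intro mult_left_mono ib) simp
  also have "\<dots> = d / 2 * (1 - exp (- (k * \<tau>)))"
  proof -
    have c: "20 * (n + 1) = k / 2" using k by simp
    have e1: "exp (- (k * \<tau>)) * exp (k * \<tau>) = 1" by (simp add: exp_minus)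
    have g: "F * (k / 2 * d * (E - 1) / k) = d / 2 * (F * E - F)" for F E :: real
      using kp by (simp add: field_simps)
    show ?thesis unfolding c g e1 ..
  qed
  also have "\<dots> \<le> d / 2 * 1" using d by (intro mult_left_mono) auto
  finally show ?thesis unfolding d_def by simp
qed



lemma exists_sol:
  fixes n y0 z0 :: real
  assumes n: "n \<ge> 1"
    and D: "y0 > 0" "z0 > 0" "z0^2 * (n + 1) / (z0^2 + n) \<le> y0" "y0 < 1"
  shows "\<exists>y z. global_solution n y0 z0 y z"
proof -
  define k where "k = 40 * (n + 1)"
  have kp: "k > 0" unfolding k_def using n by simp
  define x0 where "x0 = (y0, z0)"
  define Phi where "Phi u = Bcontfun (Phif n k x0 u)" for u
  have app: "apply_bcontfun (Phi u) = Phif n k x0 u" for u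
    unfolding Phi_def by (rule Bcontfun_inverse[OF Phif_bcontfun[OF n kp]])
  have contr: "\<forall>u v. dist (Phi u) (Phi v) \<le> 1/2 * dist u v"
  proof (intro allI)
    fix u v
    show "dist (Phi u) (Phi v) \<le> 1/2 * dist u v"
    proof (rule dist_bound)
      fix t
      show "dist (apply_bcontfun (Phi u) t) (apply_bcontfun (Phi v) t) \<le> 1/2 * dist u v"
        unfolding app by (rule Phif_contr[OF n k_def])
    qed
  qed
  obtain u where hfix: "Phi u = u" using banach_fix_type[of "1/2" Phi] contr by auto
  define X where "X t = x0 + integral {0..t} (gfun n k u)" for t
  have uX: "exp (k * t) *\<^sub>R apply_bcontfun u t = X t" if t: "t \<ge> 0" for t
  proof -
    have "apply_bcontfun u t = Phif n k x0 u t" using hfix app by metis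
    also have "\<dots> = exp (- (k * t)) *\<^sub>R X t" unfolding Phif_def X_def using t by simp
    finally have "exp (k * t) *\<^sub>R apply_bcontfun u t = (exp (k * t) * exp (- (k * t))) *\<^sub>R X t" by simp
    also have "exp (k * t) * exp (- (k * t)) = 1" by (simp add: exp_minus)
    finally show ?thesis by simp
  qed
  have gX: "gfun n k u s = GG n (X s)" if "s \<ge> 0" for s unfolding gfun_def using uX[OF that] by simp
  have dX: "(X has_vector_derivative GG n (X t)) (at t within {0..})" if t: "t \<ge> 0" for t
  proof -
    have "((\<lambda>t. x0 + integral {0..t} (gfun n k u)) has_vector_derivative 0 + gfun n k u t) (at t within {0..})"
      by (intro has_vector_derivative_add has_vector_derivative_const indef_int_deriv[OF cont_gfun t])
    then show ?thesis unfolding X_def[symmetric] using gX[OF t] by (simp add: X_def[abs_def])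
  qed
  define y where "y t = fst (X t)" for t
  define z where "z t = snd (X t)" for t
  define Fy where "Fy a b = fy n (clamp a) (clamp b)" for a b
  define Fz where "Fz a b = fz n (clamp a) (clamp b)" for a b
  have dy: "(y has_real_derivative Fy (y t) (z t)) (at t within {0..})" if t: "t \<ge> 0" for t
  proof -
    have "((\<lambda>t. fst (X t)) has_vector_derivative fst (GG n (X t))) (at t within {0..})"
      by (rule bounded_linear.has_vector_derivative[OF bounded_linear_fst dX[OF t]])
    then show ?thesis unfolding has_real_derivative_iff_has_vector_derivative y_def[abs_def] z_def Fy_def GG_def
      by simp
  qed
  have dz: "(z has_real_derivative Fz (y t) (z t)) (at t within {0..})" if t: "t \<ge> 0" for t
  proof -
    have "((\<lambda>t. snd (X t)) has_vector_derivative snd (GG n (X t))) (at t within {0..})"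
      by (rule bounded_linear.has_vector_derivative[OF bounded_linear_snd dX[OF t]])
    then show ?thesis unfolding has_real_derivative_iff_has_vector_derivative z_def[abs_def] y_def Fz_def GG_def
      by simp
  qed
  have X0: "X 0 = x0" unfolding X_def by simp
  have init: "y 0 = y0" "z 0 = z0" unfolding y_def z_def X0 x0_def by simp_all
  have FF: "Fy a b = fy n a b \<and> Fz a b = fz n a b" if "0 \<le> a" "a \<le> 1" "0 \<le> b" "b \<le> 1" for a b
    unfolding Fy_def Fz_def using that by (simp add: clamp_id)
  have n0: "n > 0" using n by simp
  have inv: "z t > 0 \<and> psi n (y t) (z t) \<ge> 0 \<and> y t \<le> y0 \<and> 0 < y t \<and> y t < 1 \<and> z t < 1" if "t \<ge> 0" for t
    by (rule inv_global[OF n0 D init FF dy dz that])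
  have "global_solution n y0 z0 y z"
    unfolding global_solution_def
  proof (intro conjI init allI impI)
    fix t :: real assume t: "0 \<le> t"
    have e: "Fy (y t) (z t) = fy n (y t) (z t)" "Fz (y t) (z t) = fz n (y t) (z t)"
      using FF[of "y t" "z t"] inv[OF t] by auto
    show "(y has_real_derivative fy n (y t) (z t)) (at t within {0..})" using dy[OF t] e by simp
    show "(z has_real_derivative fz n (y t) (z t)) (at t within {0..})" using dz[OF t] e by simp
  qed
  then show ?thesis by blast
qed

theorem theorem3p5:
  fixes n :: nat and y0 z0 :: real
  assumes "n \<ge> 2" and "(y0, z0) \<in> regionD (real n)"
  shows "(\<exists>y z. global_solution (real n) y0 z0 y z) \<and>
         (\<forall>y z. global_solution (real n) y0 z0 y z \<longrightarrow>
                 (y \<longlongrightarrow> 0) at_top \<and> (z \<longlongrightarrow> 0) at_top)"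
proof -
  have D: "y0 > 0" "z0 > 0" "z0^2 * (real n + 1) / (z0^2 + real n) \<le> y0" "y0 < 1"
    using assms(2) unfolding regionD_def by auto
  have n1: "real n \<ge> 1" using assms(1) by simp
  have n0: "real n > 0" using assms(1) by simp
  show ?thesis
    using exists_sol[OF n1 D] converge[OF n0 D] by blast
qed


end
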